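(* Let $p$ be any prime and $k$ a field of characteristic $p$. Then $L_1\neq L_2$.
   Context: Let $X=\{x_1,x_2,\ldots\}$ be a countably infinite set and let $k_0\langle X\rangle$ denote the free associative $k$-algebra (without identity) on $X$. A $T$-space of $k_0\langle X\rangle$ is a $k$-linear subspace closed under every algebra endomorphism of $k_0\langle X\rangle$; the $T$-space generated by a subset is the smallest $T$-space containing it. Let $L_1$ be the $T$-space generated by $x_1^p$, and let $L_2$ be the $T$-space generated by $L_1$ together with all products $u\,v^p$ with $u\in L_1$, $v\in k_0\langle X\rangle$ (equivalently, the $T$-space generated by $x_1^p$ and $x_1^px_2^p$). *)

theory Defs
  imports Main "HOL-Computational_Algebra.Primes"
begin

text \<open>The free associative k-algebra without identity on countably many variables
x_0, x_1, x_2, ... : elements are finitely supported coefficient functions on words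
(lists of variable indices), with zero coefficient on the empty word.
The variable x_i of the paper is represented by index i.\<close>

definition FA :: "(nat list \<Rightarrow> 'k::field) set" where
  "FA = {f. finite {w. f w \<noteq> 0} \<and> f [] = 0}"

definition fa_zero :: "nat list \<Rightarrow> 'k::field" where
  "fa_zero = (\<lambda>w. 0)"

definition fa_add :: "(nat list \<Rightarrow> 'k::field) \<Rightarrow> (nat list \<Rightarrow> 'k) \<Rightarrow> (nat list \<Rightarrow> 'k)" where
  "fa_add f g = (\<lambda>w. f w + g w)"

definition fa_smul :: "'k::field \<Rightarrow> (nat list \<Rightarrow> 'k) \<Rightarrow> (nat list \<Rightarrow> 'k)" where
  "fa_smul c f = (\<lambda>w. c * f w)"

definition fa_mul :: "(nat list \<Rightarrow> 'k::field) \<Rightarrow> (nat list \<Rightarrow> 'k) \<Rightarrow> (nat list \<Rightarrow> 'k)" where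
  "fa_mul f g = (\<lambda>w. \<Sum>i\<le>length w. f (take i w) * g (drop i w))"

definition fa_var :: "nat \<Rightarrow> (nat list \<Rightarrow> 'k::field)" where
  "fa_var i = (\<lambda>w. if w = [i] then 1 else 0)"

text \<open>Positive powers: fa_pow f n = f^n for n \<ge> 1.\<close>
definition fa_pow :: "(nat list \<Rightarrow> 'k::field) \<Rightarrow> nat \<Rightarrow> (nat list \<Rightarrow> 'k)" where
  "fa_pow f n = ((fa_mul f) ^^ (n - 1)) f"

definition is_endo :: "((nat list \<Rightarrow> 'k::field) \<Rightarrow> (nat list \<Rightarrow> 'k)) \<Rightarrow> bool" where
  "is_endo h \<longleftrightarrow>
     (\<forall>f\<in>FA. h f \<in> FA) \<and>
     (\<forall>f\<in>FA. \<forall>g\<in>FA. h (fa_add f g) = fa_add (h f) (h g)) \<and>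
     (\<forall>c. \<forall>f\<in>FA. h (fa_smul c f) = fa_smul c (h f)) \<and>
     (\<forall>f\<in>FA. \<forall>g\<in>FA. h (fa_mul f g) = fa_mul (h f) (h g))"

definition is_Tspace :: "(nat list \<Rightarrow> 'k::field) set \<Rightarrow> bool" where
  "is_Tspace V \<longleftrightarrow>
     V \<subseteq> FA \<and> fa_zero \<in> V \<and>
     (\<forall>f\<in>V. \<forall>g\<in>V. fa_add f g \<in> V) \<and>
     (\<forall>c. \<forall>f\<in>V. fa_smul c f \<in> V) \<and>
     (\<forall>h. is_endo h \<longrightarrow> (\<forall>f\<in>V. h f \<in> V))"

definition Tgen :: "(nat list \<Rightarrow> 'k::field) set \<Rightarrow> (nat list \<Rightarrow> 'k) set" where
  "Tgen S = \<Inter>{V. is_Tspace V \<and> S \<subseteq> V}"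

definition L1 :: "nat \<Rightarrow> (nat list \<Rightarrow> 'k::field) set" where
  "L1 p = Tgen {fa_pow (fa_var 1) p}"

definition L2 :: "nat \<Rightarrow> (nat list \<Rightarrow> 'k::field) set" where
  "L2 p = Tgen (L1 p \<union> {fa_mul u (fa_pow v p) | u v. u \<in> L1 p \<and> v \<in> FA})"

end

theory Submission
  imports Defs "HOL-Computational_Algebra.Primes"
begin


lemma funpow_mod:
  assumes "(r ^^ p) a = a"
  shows "(r ^^ n) a = (r ^^ (n mod p)) a"
proof -
  have k: "(r ^^ (p * k)) a = a" for k
  proof (induction k)
    case (Suc k)
    have "(r ^^ (p * Suc k)) a = (r ^^ p) ((r ^^ (p * k)) a)"
      by (simp add: mult_Suc_right funpow_add)
    then show ?case using Suc assms by simp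
  qed simp
  have "n = n mod p + p * (n div p)" by simp
  then have "(r ^^ n) a = (r ^^ (n mod p)) ((r ^^ (p * (n div p))) a)"
    by (metis comp_apply funpow_add)
  then show ?thesis using k by simp
qed

lemma orbit_sum:
  fixes F :: "'a \<Rightarrow> 'k::comm_ring_1"
  assumes "finite A" "prime p"
    and cl: "\<And>x. x \<in> A \<Longrightarrow> r x \<in> A"
    and per: "\<And>x. x \<in> A \<Longrightarrow> (r ^^ p) x = x"
    and nf: "\<And>x. x \<in> A \<Longrightarrow> r x \<noteq> x"
    and inv: "\<And>x. x \<in> A \<Longrightarrow> F (r x) = F x"
  shows "\<exists>c. sum F A = of_nat p * c"
  using assms(1) cl per nf inv
proof (induction A rule: finite_psubset_induct)
  case (psubset A)
  show ?case
  proof (cases "A = {}")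
    case True then show ?thesis by (auto intro: exI[of _ 0])
  next
    case False
    then obtain a where a: "a \<in> A" by blast
    have p2: "p \<ge> 2" using assms(2) prime_ge_2_nat by blast
    have iter: "(r ^^ n) x \<in> A" if "x \<in> A" for x n
      using that by (induction n) (auto intro: psubset.prems)
    have Finv: "F ((r ^^ n) x) = F x" if "x \<in> A" for x n
      using that by (induction n) (auto simp: psubset.prems iter)
    define Orb where "Orb = (\<lambda>j. (r ^^ j) a) ` {..<p}"
    have inj: "inj_on (\<lambda>j. (r ^^ j) a) {..<p}"
    proof (rule ccontr)
      assume "\<not> ?thesis"
      then obtain i j where ij: "i < j" "j < p" "(r ^^ i) a = (r ^^ j) a"
        unfolding inj_on_def by (metis lessThan_iff linorder_neqE_nat)
      define d where "d = j - i"
      have "(r ^^ (p - i)) ((r ^^ i) a) = (r ^^ (p - i)) ((r ^^ j) a)" using ij by simp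
      moreover have "(r ^^ (p - i)) ((r ^^ i) a) = (r ^^ (p - i + i)) a"
        by (simp add: funpow_add)
      moreover have "(r ^^ (p - i)) ((r ^^ j) a) = (r ^^ (p - i + j)) a"
        by (simp add: funpow_add)
      moreover have "p - i + i = p" "p - i + j = p + d" using ij by (auto simp: d_def)
      ultimately have "(r ^^ p) a = (r ^^ (p + d)) a" by simp
      then have dfix: "(r ^^ d) a = a"
      proof -
        have "(r ^^ (d + p)) a = (r ^^ d) ((r ^^ p) a)" by (simp only: funpow_add comp_apply)
        then show ?thesis using psubset.prems(2)[OF a] \<open>(r ^^ p) a = (r ^^ (p + d)) a\<close>
          by (simp add: add.commute)
      qed
      have dm: "(r ^^ (d * m)) a = a" for m
        by (induction m) (simp_all, metis comp_apply funpow_add dfix mult_Suc_right add.commute)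
      have d0: "d \<noteq> 0" "d < p" using ij by (auto simp: d_def)
      have "coprime d p" using d0 assms(2)
        by (metis coprime_commute less_not_refl2 nat_dvd_not_less neq0_conv prime_imp_coprime_nat)
      then have "gcd d p = 1" by simp
      then obtain x y where xy: "d * x = p * y + 1" using bezout_nat[OF d0(1), of p] by auto
      have "(r ^^ (d * x)) a = (r ^^ ((p * y + 1) mod p)) a"
        using funpow_mod[where r=r and p=p and a=a] psubset.prems(2)[OF a] xy by metis
      then have "a = r a" using dm p2 by (simp add: mod_Suc)
      then show False using psubset.prems(3)[OF a] psubset.prems by auto
    qed
    have OrbA: "Orb \<subseteq> A" using a iter by (auto simp: Orb_def)
    have sOrb: "sum F Orb = of_nat p * F a"
      unfolding Orb_def by (simp add: sum.reindex[OF inj] Finv[OF a])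
    have rest: "x \<in> A - Orb \<Longrightarrow> r x \<in> A - Orb" for x
    proof
      assume x: "x \<in> A - Orb"
      then show "r x \<in> A" using psubset.prems by auto
      show "r x \<notin> Orb"
      proof
        assume "r x \<in> Orb"
        then obtain j where j: "j < p" "r x = (r ^^ j) a" by (auto simp: Orb_def)
        have "x = (r ^^ (p - 1)) (r x)" using psubset.prems(2)[of x] x p2
          by (metis DiffD1 Suc_diff_1 comp_apply funpow_Suc_right le_less_trans not_less_eq_eq zero_less_iff_neq_zero numeral_2_eq_2 le0 psubset.prems(2))
        also have "\<dots> = (r ^^ (p - 1 + j)) a" using j by (simp only: funpow_add comp_apply)
        also have "\<dots> = (r ^^ ((p - 1 + j) mod p)) a" using funpow_mod psubset.prems(2)[OF a] by metis
        finally have "x \<in> Orb" unfolding Orb_def using p2 by auto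
        then show False using x by auto
      qed
    qed
    have "a \<in> Orb" using p2 unfolding Orb_def by (auto simp: image_iff intro!: bexI[of _ 0])
    then have "A - Orb \<subset> A" using a by auto
    then obtain c where c: "sum F (A - Orb) = of_nat p * c"
      using psubset.IH[of "A - Orb"] rest psubset.prems by auto
    have "sum F A = sum F Orb + sum F (A - Orb)"
      using OrbA psubset.hyps by (metis add.commute sum.subset_diff)
    then show ?thesis using sOrb c by (auto simp: distrib_left intro: exI[of _ "F a + c"])
  qed
qed



definition ind :: "nat list \<Rightarrow> nat list \<Rightarrow> 'k::field" where
  "ind u = (\<lambda>w. if w = u then 1 else 0)"

lemma fa_mul_ind: "fa_mul (ind u) (ind v) = (ind (u @ v) :: nat list \<Rightarrow> 'k::field)"
proof
  fix w
  show "fa_mul (ind u) (ind v) w = (ind (u @ v) :: nat list \<Rightarrow> 'k) w"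
  proof (cases "w = u @ v")
    case True
    have "fa_mul (ind u) (ind v) w = (\<Sum>i\<in>{length u}. (ind u (take i w) * ind v (drop i w)::'k))"
      unfolding fa_mul_def
      apply (rule sum.mono_neutral_right)
         apply (auto simp: True ind_def)
      apply (drule arg_cong[where f=length])
      apply (auto simp: min_def split: if_splits)
      done
    then show ?thesis by (simp add: True ind_def)
  next
    case False
    then have z: "(ind u (take i w) * ind v (drop i w) :: 'k) = 0" for i
      by (auto simp: ind_def)
    have "fa_mul (ind u) (ind v) w = (0::'k)"
      unfolding fa_mul_def by (simp only: z sum.neutral_const)
    then show ?thesis using False by (simp add: ind_def)
  qed
qed

lemma fa_pow_Suc: "fa_pow g (Suc (Suc n)) = fa_mul g (fa_pow g (Suc n))"
  by (simp add: fa_pow_def)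

lemma fa_pow_1[simp]: "fa_pow g (Suc 0) = g"
  by (simp add: fa_pow_def)

lemma fa_pow_ind: "fa_pow (ind u) (Suc n) = (ind (concat (replicate (Suc n) u)) :: nat list \<Rightarrow> 'k::field)"
  by (induction n) (simp_all add: fa_pow_Suc fa_mul_ind)

lemma fa_mul_FA: assumes "f \<in> FA" "g \<in> FA" shows "fa_mul f g \<in> FA"
proof -
  let ?Sf = "{w. f w \<noteq> 0}" and ?Sg = "{w. g w \<noteq> 0}"
  have "{w. fa_mul f g w \<noteq> 0} \<subseteq> (\<lambda>(u,v). u @ v) ` (?Sf \<times> ?Sg)"
  proof
    fix w assume "w \<in> {w. fa_mul f g w \<noteq> 0}"
    then obtain i where "f (take i w) * g (drop i w) \<noteq> 0"
      unfolding fa_mul_def by (auto elim: sum.not_neutral_contains_not_neutral)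
    then show "w \<in> (\<lambda>(u,v). u @ v) ` (?Sf \<times> ?Sg)"
      by (auto intro!: image_eqI[of _ _ "(take i w, drop i w)"])
  qed
  moreover have "finite ((\<lambda>(u,v). u @ v) ` (?Sf \<times> ?Sg))" using assms by (auto simp: FA_def)
  ultimately show ?thesis using assms by (auto simp: FA_def fa_mul_def intro: finite_subset)
qed

lemma iter_FA: "f \<in> FA \<Longrightarrow> (fa_mul f ^^ n) f \<in> FA"
  by (induction n) (auto intro: fa_mul_FA)

lemma fa_pow_FA: "f \<in> FA \<Longrightarrow> fa_pow f n \<in> FA"
  by (simp add: fa_pow_def iter_FA)

lemma endo_iter: assumes "is_endo h" "f \<in> FA"
  shows "h ((fa_mul f ^^ n) f) = (fa_mul (h f) ^^ n) (h f)"
  using assms iter_FA[OF assms(2)]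
  by (induction n) (auto simp: is_endo_def iter_FA)

lemma endo_pow: "is_endo h \<Longrightarrow> f \<in> FA \<Longrightarrow> h (fa_pow f n) = fa_pow (h f) n"
  by (simp add: fa_pow_def endo_iter)

definition fact :: "nat \<Rightarrow> nat list \<Rightarrow> nat list list set" where
  "fact n w = {us. length us = n \<and> concat us = w}"

lemma length_in_concat: "u \<in> set us \<Longrightarrow> length u \<le> length (concat us)"
  by (induction us) auto

lemma finite_fact: "finite (fact n w)"
proof -
  have "fact n w \<subseteq> {us. set us \<subseteq> {u. set u \<subseteq> set w \<and> length u \<le> length w} \<and> length us = n}"
    by (auto simp: fact_def length_in_concat)
  moreover have "finite {u. set u \<subseteq> set w \<and> length u \<le> length w}"
    by (rule finite_lists_length_le) simp
  ultimately show ?thesis using finite_lists_length_eq finite_subset by blast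
qed

lemma fa_pow_formula:
  "fa_pow g (Suc n) w = (\<Sum>us\<in>fact (Suc n) w. prod_list (map g us))"
proof (induction n arbitrary: w)
  case 0
  have "fact (Suc 0) w = {[w]}" by (auto simp: fact_def length_Suc_conv)
  then show ?case by simp
next
  case (Suc n)
  have "fa_pow g (Suc (Suc n)) w = (\<Sum>i\<le>length w. g (take i w) * (\<Sum>us\<in>fact (Suc n) (drop i w). prod_list (map g us)))"
    by (simp add: fa_pow_Suc fa_mul_def Suc)
  also have "\<dots> = (\<Sum>i\<le>length w. \<Sum>us\<in>fact (Suc n) (drop i w). prod_list (map g (take i w # us)))"
    by (simp add: sum_distrib_left)
  also have "\<dots> = (\<Sum>(i,us)\<in>(SIGMA i:{..length w}. fact (Suc n) (drop i w)). prod_list (map g (take i w # us)))"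
    by (rule sum.Sigma) (auto simp: finite_fact)
  also have "\<dots> = (\<Sum>us\<in>fact (Suc (Suc n)) w. prod_list (map g us))"
    by (rule sum.reindex_bij_witness[where i = "\<lambda>us. (length (hd us), tl us)" and j = "\<lambda>(i,us). take i w # us"])
       (auto simp: fact_def length_Suc_conv)
  finally show ?case .
qed



definition ppow :: "nat \<Rightarrow> nat list \<Rightarrow> nat list" where
  "ppow n v = concat (replicate n v)"

definition DD :: "nat \<Rightarrow> nat list set" where
  "DD p = {w. length w = 2 * p \<and> set w \<subseteq> {1,2} \<and> (\<forall>v. w \<noteq> ppow p v)}"

definition psi :: "nat \<Rightarrow> (nat list \<Rightarrow> 'k::field) \<Rightarrow> 'k" where
  "psi p g = (\<Sum>w\<in>DD p. g w)"

lemma finite_DD: "finite (DD p)"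
proof -
  have "DD p \<subseteq> {xs. set xs \<subseteq> {1,2} \<and> length xs = 2 * p}" by (auto simp: DD_def)
  then show ?thesis by (rule finite_subset) (rule finite_lists_length_eq, simp)
qed

lemma concat_rep_shift: "concat (replicate q (x @ y)) @ x = x @ concat (replicate q (y @ x))"
  by (induction q) auto

lemma rotate1_ppow: "rotate1 (ppow n v) = ppow n (rotate1 v)"
proof (cases v)
  case (Cons a v')
  then show ?thesis
  proof (cases n)
    case (Suc q)
    have "rotate1 (ppow n v) = v' @ (concat (replicate q ([a] @ v')) @ [a])"
      using Cons Suc by (simp add: ppow_def)
    also have "\<dots> = v' @ [a] @ concat (replicate q (v' @ [a]))"
      by (simp only: concat_rep_shift)
    finally show ?thesis using Cons Suc by (simp add: ppow_def)
  qed (simp add: ppow_def)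
qed (simp add: ppow_def)

lemma rotate_ppow: "rotate k (ppow n v) = ppow n (rotate k v)"
  by (induction k) (simp_all add: rotate1_ppow)

lemma rotate_inv: assumes "xs \<noteq> []" shows "\<exists>m. rotate m (rotate k xs) = xs"
proof -
  let ?L = "length xs"
  have L: "?L > 0" using assms by simp
  have "(?L - k mod ?L + k) mod ?L = 0"
  proof -
    have "?L - k mod ?L + k = ?L * (1 + k div ?L)"
    proof -
      have a: "k = ?L * (k div ?L) + k mod ?L" by simp
      have b: "k mod ?L < ?L" using L by simp
      have "?L - k mod ?L + k = ?L + ?L * (k div ?L)" using a b by linarith
      then show ?thesis by (simp add: algebra_simps)
    qed
    then show ?thesis by simp
  qed
  then show ?thesis by (auto simp: rotate_rotate intro!: exI[of _ "?L - k mod ?L"])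
qed

lemma DD_rot: assumes "w \<in> DD p" shows "rotate k w \<in> DD p"
proof -
  have nz: "w \<noteq> [] \<or> p = 0" using assms by (auto simp: DD_def)
  show ?thesis
  proof (cases "w = []")
    case True then show ?thesis using assms by simp
  next
    case False
    obtain m where m: "rotate m (rotate k w) = w" using rotate_inv[OF False] by blast
    have "rotate k w \<noteq> ppow p v" for v
    proof
      assume "rotate k w = ppow p v"
      then have "w = ppow p (rotate m v)" using m rotate_ppow by metis
      then show False using assms by (auto simp: DD_def)
    qed
    then show ?thesis using assms by (auto simp: DD_def)
  qed
qed

lemma concat_rotate1: "us \<noteq> [] \<Longrightarrow> concat (rotate1 us) = rotate (length (hd us)) (concat us)"
  by (cases us) (auto simp: rotate_append)

lemma fix_rep: assumes "rotate1 us = us" "us \<noteq> []" shows "us = replicate (length us) (hd us)"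
proof -
  have "card (set us) = 1" using rotate1_fixpoint_card[OF assms(1)] assms(2) by auto
  then obtain x where "set us = {x}" using card_1_singletonE by blast
  moreover have "hd us \<in> set us" using assms(2) by simp
  ultimately show ?thesis by (metis replicate_length_same singletonD)
qed

lemma prod_rotate1: "prod_list (map g (rotate1 us)) = prod_list (map (g::_ \<Rightarrow> 'k::comm_monoid_mult) us)"
  by (cases us) (auto simp: mult.commute)

lemma key:
  fixes g :: "nat list \<Rightarrow> 'k::field"
  assumes "prime p" "CHAR('k) = p"
  shows "psi p (fa_pow g p) = 0"
proof -
  have p2: "p \<ge> 2" using assms(1) prime_ge_2_nat by blast
  then obtain q where q: "p = Suc q" by (cases p) auto
  define T where "T = {us. length us = p \<and> concat us \<in> DD p}"
  define F where "F us = prod_list (map g us)" for us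
  have fT: "finite T"
  proof -
    have "T \<subseteq> {us. set us \<subseteq> {u. set u \<subseteq> {1,2} \<and> length u \<le> 2 * p} \<and> length us = p}"
      unfolding T_def DD_def using length_in_concat by fastforce
    moreover have "finite {u. set u \<subseteq> {1,2::nat} \<and> length u \<le> 2 * p}"
      by (rule finite_lists_length_le) simp
    ultimately show ?thesis using finite_lists_length_eq finite_subset by blast
  qed
  have "psi p (fa_pow g p) = (\<Sum>w\<in>DD p. \<Sum>us\<in>{x \<in> T. concat x = w}. F us)"
    unfolding psi_def
  proof (rule sum.cong[OF refl])
    fix w assume w: "w \<in> DD p"
    have "fact p w = {x \<in> T. concat x = w}" using w by (auto simp: fact_def T_def)
    then show "fa_pow g p w = (\<Sum>us\<in>{x \<in> T. concat x = w}. F us)"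
      using fa_pow_formula[of g q w] q by (simp add: F_def)
  qed
  also have "\<dots> = sum F T"
    by (rule sum.group[OF fT finite_DD]) (auto simp: T_def)
  also have "\<exists>c. sum F T = of_nat p * c"
  proof (rule orbit_sum[OF fT assms(1), where r = rotate1])
    fix x assume x: "x \<in> T"
    then have xne: "x \<noteq> []" using p2 by (auto simp: T_def)
    show "rotate1 x \<in> T" using x xne by (auto simp: T_def concat_rotate1 DD_rot)
    show "(rotate1 ^^ p) x = x" using x by (simp add: T_def flip: rotate_def)
    show "F (rotate1 x) = F x" by (simp add: F_def prod_rotate1)
    show "rotate1 x \<noteq> x"
    proof
      assume "rotate1 x = x"
      then have "x = replicate p (hd x)" using fix_rep xne x by (auto simp: T_def)
      then have "concat x = ppow p (hd x)" by (metis ppow_def)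
      then show False using x by (auto simp: T_def DD_def)
    qed
  qed
  then have "sum F T = 0" using assms(2) by (metis mult_zero_left of_nat_CHAR)
  finally show ?thesis .
qed



lemma add_FA: "f \<in> FA \<Longrightarrow> g \<in> FA \<Longrightarrow> fa_add f g \<in> FA"
proof -
  assume a: "f \<in> FA" "g \<in> FA"
  have "{w. fa_add f g w \<noteq> 0} \<subseteq> {w. f w \<noteq> 0} \<union> {w. g w \<noteq> 0}" by (auto simp: fa_add_def)
  then show ?thesis using a by (auto simp: FA_def fa_add_def intro: finite_subset)
qed

lemma smul_FA: "f \<in> FA \<Longrightarrow> fa_smul c f \<in> FA"
proof -
  assume a: "f \<in> FA"
  have "{w. fa_smul c f w \<noteq> 0} \<subseteq> {w. f w \<noteq> 0}" by (auto simp: fa_smul_def)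
  then show ?thesis using a by (auto simp: FA_def fa_smul_def intro: finite_subset)
qed

lemma zero_FA: "fa_zero \<in> FA" by (simp add: FA_def fa_zero_def)

lemma endo_zero:
  fixes h :: "(nat list \<Rightarrow> 'a::field) \<Rightarrow> (nat list \<Rightarrow> 'a)"
  shows "is_endo h \<Longrightarrow> h fa_zero = fa_zero"
proof -
  assume h: "is_endo h"
  have "fa_smul 0 fa_zero = (fa_zero :: nat list \<Rightarrow> 'a)" by (simp add: fa_smul_def fa_zero_def)
  then have "h fa_zero = h (fa_smul 0 fa_zero)" by simp
  also have "\<dots> = fa_smul 0 (h fa_zero)" using h zero_FA unfolding is_endo_def by blast
  finally show ?thesis by (simp add: fa_smul_def fa_zero_def)
qed

lemma endo_comp: "is_endo h \<Longrightarrow> is_endo h' \<Longrightarrow> is_endo (h \<circ> h')"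
  unfolding is_endo_def by (auto simp: add_FA smul_FA fa_mul_FA)

lemma endo_id: "is_endo id" by (simp add: is_endo_def)

lemma psi_add: "psi p (fa_add f g) = psi p f + psi p g"
  by (simp add: psi_def fa_add_def sum.distrib)

lemma psi_smul: "psi p (fa_smul c f) = c * psi p f"
  by (simp add: psi_def fa_smul_def sum_distrib_left)

lemma psi_zero: "psi p fa_zero = 0" by (simp add: psi_def fa_zero_def)

lemma Tgen_sub: "is_Tspace V \<Longrightarrow> S \<subseteq> V \<Longrightarrow> Tgen S \<subseteq> V"
  by (auto simp: Tgen_def)

lemma Tgen_gen: "S \<subseteq> Tgen S" by (auto simp: Tgen_def)

lemma ppow_single: "ppow n [a] = replicate n a"
  by (induction n) (auto simp: ppow_def)

lemma length_ppow: "length (ppow n v) = n * length v"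
  by (induction n) (auto simp: ppow_def)

lemma w0_DD: assumes "prime p" shows "replicate p 1 @ replicate p 2 \<in> DD p"
proof -
  have p2: "p \<ge> 2" using assms prime_ge_2_nat by blast
  then obtain q where q: "p = Suc (Suc q)" by (metis add_2_eq_Suc le_Suc_ex)
  have "replicate p 1 @ replicate p 2 \<noteq> ppow p v" for v
  proof
    assume e: "replicate p 1 @ replicate p 2 = ppow p v"
    then have "2 * p = p * length v" by (metis length_append length_ppow length_replicate mult_2)
    then have "length v = 2" using p2 by simp
    then obtain a b where v: "v = [a, b]" by (metis (no_types) length_0_conv length_Suc_conv numeral_2_eq_2)
    have "ppow p v = a # b # ppow (Suc q) v" using q v by (simp add: ppow_def)
    then have "a = 1" "b = 1" using e q by auto
    then have "set (ppow p v) \<subseteq> {1::nat}" using v by (auto simp: ppow_def)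
    moreover have "(2::nat) \<in> set (replicate p 1 @ replicate p 2)" using p2 by simp
    ultimately have "(2::nat) \<in> {1}" using e by (metis subsetD)
    then show False by simp
  qed
  then show ?thesis by (auto simp: DD_def)
qed



lemma endo_FA: "is_endo h \<Longrightarrow> f \<in> FA \<Longrightarrow> h f \<in> FA"
  unfolding is_endo_def by (elim conjE) (erule bspec)

lemma endo_add: "is_endo h \<Longrightarrow> f \<in> FA \<Longrightarrow> g \<in> FA \<Longrightarrow> h (fa_add f g) = fa_add (h f) (h g)"
  unfolding is_endo_def by (elim conjE) (drule bspec, assumption, drule bspec, assumption)

lemma endo_smul: "is_endo h \<Longrightarrow> f \<in> FA \<Longrightarrow> h (fa_smul c f) = fa_smul c (h f)"
  unfolding is_endo_def by (elim conjE) (drule spec[of _ c], drule bspec, assumption)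

definition Vset :: "nat \<Rightarrow> (nat list \<Rightarrow> 'k::field) set" where
  "Vset p = {f \<in> FA. \<forall>h. is_endo h \<longrightarrow> psi p (h f) = 0}"

lemma V_add: "f \<in> Vset p \<Longrightarrow> g \<in> Vset p \<Longrightarrow> fa_add f g \<in> Vset p"
  unfolding Vset_def by (simp add: add_FA endo_add psi_add)

lemma V_smul: "f \<in> Vset p \<Longrightarrow> fa_smul c f \<in> Vset p"
  unfolding Vset_def by (simp add: smul_FA endo_smul psi_smul)

lemma V_zero: "fa_zero \<in> Vset p"
  unfolding Vset_def by (simp add: zero_FA endo_zero psi_zero)

lemma V_endo: assumes "is_endo h" "f \<in> Vset p" shows "h f \<in> Vset p"
proof -
  have "h f \<in> FA" using assms endo_FA unfolding Vset_def by blast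
  moreover have "psi p (h' (h f)) = 0" if "is_endo h'" for h'
  proof -
    have "is_endo (h' \<circ> h)" using endo_comp assms(1) that by blast
    then show ?thesis using assms(2) unfolding Vset_def by (metis (mono_tags, lifting) comp_apply mem_Collect_eq)
  qed
  ultimately show ?thesis unfolding Vset_def by blast
qed

lemma V_T: "is_Tspace (Vset p)"
  unfolding is_Tspace_def
proof (intro conjI ballI allI impI)
  show "Vset p \<subseteq> FA" unfolding Vset_def by blast
qed (auto intro: V_add V_smul V_zero V_endo)



lemma gen_in_V:
  assumes "prime p" "CHAR('k::field) = p"
  shows "(fa_pow (fa_var 1) p :: nat list \<Rightarrow> 'k) \<in> Vset p"
proof -
  have x1FA: "(fa_var 1 :: nat list \<Rightarrow> 'k) \<in> FA" by (simp add: FA_def fa_var_def)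
  have "psi p (h (fa_pow (fa_var 1) p)) = 0" if h: "is_endo h" for h :: "(nat list \<Rightarrow> 'k) \<Rightarrow> _"
  proof -
    have "h (fa_pow (fa_var 1) p) = fa_pow (h (fa_var 1)) p" using endo_pow[OF h x1FA] .
    then show ?thesis using key[OF assms] by simp
  qed
  then show ?thesis unfolding Vset_def using x1FA fa_pow_FA by blast
qed

lemma e_ind:
  assumes "p = Suc q"
  shows "(fa_mul (fa_pow (fa_var 1) p) (fa_pow (fa_var 2) p) :: nat list \<Rightarrow> 'k::field)
     = ind (replicate p 1 @ replicate p 2)"
proof -
  have v: "fa_var i = ind [i]" for i by (simp add: fa_var_def ind_def fun_eq_iff)
  have "(fa_mul (fa_pow (fa_var 1) p) (fa_pow (fa_var 2) p) :: nat list \<Rightarrow> 'k)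
     = ind (ppow p [1] @ ppow p [2])"
    unfolding v assms by (simp only: fa_pow_ind fa_mul_ind flip: ppow_def)
  then show ?thesis by (simp only: ppow_single)
qed

lemma psi_ind: "w \<in> DD p \<Longrightarrow> psi p (ind w :: nat list \<Rightarrow> 'k::field) = 1"
  unfolding psi_def ind_def using finite_DD by simp

theorem theorem5p2:
  fixes p :: nat
  assumes "prime p" and "CHAR('k::field) = p"
  shows "(L1 p :: (nat list \<Rightarrow> 'k) set) \<noteq> L2 p"
proof
  assume eq: "(L1 p :: (nat list \<Rightarrow> 'k) set) = L2 p"
  have L1V: "(L1 p :: (nat list \<Rightarrow> 'k) set) \<subseteq> Vset p" unfolding L1_def
    by (rule Tgen_sub[OF V_T]) (use gen_in_V[OF assms] in blast)
  obtain q where q: "p = Suc q" using assms(1) prime_gt_0_nat not0_implies_Suc by blast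
  define e :: "nat list \<Rightarrow> 'k" where "e = fa_mul (fa_pow (fa_var 1) p) (fa_pow (fa_var 2) p)"
  have uL1: "fa_pow (fa_var 1) p \<in> (L1 p :: (nat list \<Rightarrow> 'k) set)"
    unfolding L1_def by (rule subsetD[OF Tgen_gen]) (rule singletonI)
  have x2FA: "(fa_var 2 :: nat list \<Rightarrow> 'k) \<in> FA" by (simp add: FA_def fa_var_def)
  have "e \<in> {fa_mul u (fa_pow v p) | u v. u \<in> L1 p \<and> v \<in> FA}"
    unfolding e_def
    by (rule CollectI, rule exI, rule exI, rule conjI[OF refl conjI[OF uL1 x2FA]])
  then have "e \<in> L2 p" unfolding L2_def by (meson Tgen_gen UnI2 subsetD)
  then have "e \<in> Vset p" using eq L1V by blast
  then have "psi p (id e) = 0" using endo_id unfolding Vset_def by blast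
  moreover have "e = ind (replicate p 1 @ replicate p 2)" unfolding e_def by (rule e_ind[OF q])
  moreover have "psi p (ind (replicate p 1 @ replicate p 2) :: nat list \<Rightarrow> 'k) = 1"
    by (rule psi_ind[OF w0_DD[OF assms(1)]])
  ultimately show False by simp
qed


end
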